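(* Let $\lambda$ be a partition and $\pi$ an $R_\lambda$-permutation. If $\mathcal{D}_\lambda(\pi)$, viewed as a subset of $\mathbb{Z}^{|\lambda|}$, is a convex polytope, then $\pi$ is $R_\lambda$-312-avoiding.
   Context: Fix $n\ge1$; $[m]=\{1,\dots,m\}$. A partition is $\lambda=(\lambda_1\ge\cdots\ge\lambda_n\ge0)\in\mathbb{Z}^n$, $|\lambda|:=\sum_i\lambda_i$, with boxes $(j,i)$ (column $j$, row $i$), $1\le j\le\lambda_1$, $1\le i\le\zeta_j:=\#\{i:\lambda_i\ge j\}$; $R_\lambda:=\{\zeta_j:\zeta_j<n\}$ with elements $q_1<\dots<q_r$, $q_0:=0$, $q_{r+1}:=n$. An $R_\lambda$-permutation is a permutation $\pi$ of $[n]$ (one-line notation) strictly increasing on each index set $\{q_{h-1}+1,\dots,q_h\}$; it is $R_\lambda$-312-containing if there exist $h\in[r-1]$ and $1\le a\le q_h<b\le q_{h+1}<c\le n$ with $\pi_b<\pi_c<\pi_a$, and $R_\lambda$-312-avoiding otherwise. A tableau of shape $\lambda$ fills the boxes with values in $[n]$, strictly increasing down columns and weakly increasing along rows; $\mathcal{T}_\lambda$ is their set, ordered entrywise; a tableau is identified with the point of $\mathbb{Z}^{|\lambda|}$ given by its entries. A set $\mathcal{D}\subseteq\mathbb{Z}^N$ is a convex polytope if it is the set of solutions in $\mathbb{Z}^N$ of a finite system of linear inequalities. The $\lambda$-key $Y_\lambda(\pi)$ is the tableau whose column $j$ consists of $\{\pi_1,\dots,\pi_{\zeta_j}\}$ in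 increasing order. Scanning tableau: the earliest weakly increasing subsequence (EWIS) of $x_1,x_2,\dots$ is $x_{i_1},x_{i_2},\dots$ with $i_1=1$ and $i_u$ the smallest index $>i_{u-1}$ with $x_{i_u}\ge x_{i_{u-1}}$. For $T\in\mathcal{T}_\lambda$ and $l\in[\lambda_1]$, column $l$ of $S(T)$ is computed as follows: consider the boxes of $T$ in columns $l,\dots,\lambda_1$, initially unmarked; for $k=\zeta_l,\dots,1$ in turn, form the sequence of lowest unmarked entries of columns $l,l+1,\dots$ (left to right, over columns still having unmarked boxes), take its EWIS, mark the contributing boxes, and set the entry of $S(T)$ at column $l$, row $k$ to the last term of the EWIS. $\mathcal{D}_\lambda(\pi):=\{T\in\mathcal{T}_\lambda:S(T)\le Y_\lambda(\pi)\}$. *)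

theory Defs
  imports Complex_Main
begin

text \<open>Partitions are functions lam :: nat => nat, only the values at rows 1..n matter.
  Boxes are pairs (column j, row i). Tableaux / points of Z^{|lam|} are functions
  nat*nat => int vanishing outside the boxes.\<close>

definition is_partition :: "nat \<Rightarrow> (nat \<Rightarrow> nat) \<Rightarrow> bool" where
  "is_partition n lam \<longleftrightarrow> (\<forall>i j. 1 \<le> i \<and> i \<le> j \<and> j \<le> n \<longrightarrow> lam j \<le> lam i)"

definition zeta :: "nat \<Rightarrow> (nat \<Rightarrow> nat) \<Rightarrow> nat \<Rightarrow> nat" where
  "zeta n lam j = card {i \<in> {1..n}. lam i \<ge> j}"

definition boxes :: "nat \<Rightarrow> (nat \<Rightarrow> nat) \<Rightarrow> (nat \<times> nat) set" where
  "boxes n lam = {(j, i). 1 \<le> j \<and> j \<le> lam 1 \<and> 1 \<le> i \<and> i \<le> zeta n lam j}"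

definition Rset :: "nat \<Rightarrow> (nat \<Rightarrow> nat) \<Rightarrow> nat set" where
  "Rset n lam = {zeta n lam j | j. 1 \<le> j \<and> j \<le> lam 1 \<and> zeta n lam j < n}"

definition rR :: "nat \<Rightarrow> (nat \<Rightarrow> nat) \<Rightarrow> nat" where
  "rR n lam = card (Rset n lam)"

text \<open>q h for h = 0..r+1: q_0 = 0, q_1 < ... < q_r the elements of R, q_{r+1} = n.\<close>
definition qR :: "nat \<Rightarrow> (nat \<Rightarrow> nat) \<Rightarrow> nat \<Rightarrow> nat" where
  "qR n lam h = (0 # sorted_list_of_set (Rset n lam) @ [n]) ! h"

definition R_permutation :: "nat \<Rightarrow> (nat \<Rightarrow> nat) \<Rightarrow> (nat \<Rightarrow> nat) \<Rightarrow> bool" where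
  "R_permutation n lam \<pi> \<longleftrightarrow> bij_betw \<pi> {1..n} {1..n} \<and>
     (\<forall>h \<in> {1..rR n lam + 1}. strict_mono_on {qR n lam (h-1) + 1 .. qR n lam h} \<pi>)"

definition R_312_containing :: "nat \<Rightarrow> (nat \<Rightarrow> nat) \<Rightarrow> (nat \<Rightarrow> nat) \<Rightarrow> bool" where
  "R_312_containing n lam \<pi> \<longleftrightarrow>
     (\<exists>h \<in> {1..rR n lam - 1}. \<exists>a b c. 1 \<le> a \<and> a \<le> qR n lam h \<and> qR n lam h < b \<and>
        b \<le> qR n lam (h+1) \<and> qR n lam (h+1) < c \<and> c \<le> n \<and> \<pi> b < \<pi> c \<and> \<pi> c < \<pi> a)"

definition R_312_avoiding :: "nat \<Rightarrow> (nat \<Rightarrow> nat) \<Rightarrow> (nat \<Rightarrow> nat) \<Rightarrow> bool" where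
  "R_312_avoiding n lam \<pi> \<longleftrightarrow> \<not> R_312_containing n lam \<pi>"

definition tableaux :: "nat \<Rightarrow> (nat \<Rightarrow> nat) \<Rightarrow> (nat \<times> nat \<Rightarrow> int) set" where
  "tableaux n lam = {T. (\<forall>p. p \<notin> boxes n lam \<longrightarrow> T p = 0) \<and>
     (\<forall>p \<in> boxes n lam. 1 \<le> T p \<and> T p \<le> int n) \<and>
     (\<forall>j i. (j, i) \<in> boxes n lam \<and> (j, i+1) \<in> boxes n lam \<longrightarrow> T (j, i) < T (j, i+1)) \<and>
     (\<forall>j i. (j, i) \<in> boxes n lam \<and> (j+1, i) \<in> boxes n lam \<longrightarrow> T (j, i) \<le> T (j+1, i))}"

definition tab_le :: "nat \<Rightarrow> (nat \<Rightarrow> nat) \<Rightarrow> (nat \<times> nat \<Rightarrow> int) \<Rightarrow> (nat \<times> nat \<Rightarrow> int) \<Rightarrow> bool" where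
  "tab_le n lam T U \<longleftrightarrow> (\<forall>p \<in> boxes n lam. T p \<le> U p)"

definition key :: "nat \<Rightarrow> (nat \<Rightarrow> nat) \<Rightarrow> (nat \<Rightarrow> nat) \<Rightarrow> (nat \<times> nat \<Rightarrow> int)" where
  "key n lam \<pi> = (\<lambda>(j, i). if (j, i) \<in> boxes n lam
      then int (sorted_list_of_set (\<pi> ` {1..zeta n lam j}) ! (i - 1)) else 0)"

text \<open>Earliest weakly increasing subsequence of a list of (tag, value) pairs.\<close>
fun ewis_aux :: "int \<Rightarrow> ('a \<times> int) list \<Rightarrow> ('a \<times> int) list" where
  "ewis_aux c [] = []"
| "ewis_aux c (p # ps) = (if snd p \<ge> c then p # ewis_aux (snd p) ps else ewis_aux c ps)"

fun ewis :: "('a \<times> int) list \<Rightarrow> ('a \<times> int) list" where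
  "ewis [] = []"
| "ewis (p # ps) = p # ewis_aux (snd p) ps"

text \<open>One scanning step for column l: M is the set of marked boxes.\<close>
definition has_unmarked :: "nat \<Rightarrow> (nat \<Rightarrow> nat) \<Rightarrow> (nat \<times> nat) set \<Rightarrow> nat \<Rightarrow> bool" where
  "has_unmarked n lam M j \<longleftrightarrow> (\<exists>i \<in> {1..zeta n lam j}. (j, i) \<notin> M)"

definition lowest_unmarked :: "nat \<Rightarrow> (nat \<Rightarrow> nat) \<Rightarrow> (nat \<times> nat) set \<Rightarrow> nat \<Rightarrow> nat" where
  "lowest_unmarked n lam M j = Max {i \<in> {1..zeta n lam j}. (j, i) \<notin> M}"

definition scan_seq :: "nat \<Rightarrow> (nat \<Rightarrow> nat) \<Rightarrow> (nat \<times> nat \<Rightarrow> int) \<Rightarrow> nat \<Rightarrow> (nat \<times> nat) set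
     \<Rightarrow> ((nat \<times> nat) \<times> int) list" where
  "scan_seq n lam T l M =
     map (\<lambda>j. ((j, lowest_unmarked n lam M j), T (j, lowest_unmarked n lam M j)))
       (filter (has_unmarked n lam M) [l..<lam 1 + 1])"

fun scan_iter :: "nat \<Rightarrow> (nat \<Rightarrow> nat) \<Rightarrow> (nat \<times> nat \<Rightarrow> int) \<Rightarrow> nat \<Rightarrow> nat \<Rightarrow> (nat \<times> nat) set
     \<Rightarrow> (nat \<Rightarrow> int)" where
  "scan_iter n lam T l 0 M = (\<lambda>_. 0)"
| "scan_iter n lam T l (Suc k) M =
     (let e = ewis (scan_seq n lam T l M)
      in (scan_iter n lam T l k (M \<union> set (map fst e))) (Suc k := snd (last e)))"

definition scanning :: "nat \<Rightarrow> (nat \<Rightarrow> nat) \<Rightarrow> (nat \<times> nat \<Rightarrow> int) \<Rightarrow> (nat \<times> nat \<Rightarrow> int)" where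
  "scanning n lam T = (\<lambda>(l, k). if (l, k) \<in> boxes n lam
      then scan_iter n lam T l (zeta n lam l) {} k else 0)"

definition Dset :: "nat \<Rightarrow> (nat \<Rightarrow> nat) \<Rightarrow> (nat \<Rightarrow> nat) \<Rightarrow> (nat \<times> nat \<Rightarrow> int) set" where
  "Dset n lam \<pi> = {T \<in> tableaux n lam. tab_le n lam (scanning n lam T) (key n lam \<pi>)}"

text \<open>Convex polytope in Z^B (B a finite coordinate set, points = int functions vanishing
  off B): the integer solution set of finitely many (real) linear inequalities.\<close>
definition convex_polytope_Z :: "(nat \<times> nat) set \<Rightarrow> (nat \<times> nat \<Rightarrow> int) set \<Rightarrow> bool" where
  "convex_polytope_Z B D \<longleftrightarrow> (\<exists>A :: ((nat \<times> nat \<Rightarrow> real) \<times> real) set. finite A \<and>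
     D = {x. (\<forall>p. p \<notin> B \<longrightarrow> x p = 0) \<and>
             (\<forall>(a, b) \<in> A. (\<Sum>p \<in> B. a p * real_of_int (x p)) \<le> b)})"

end

theory Submission
  imports Defs
begin

abbreviation sl :: "nat set \<Rightarrow> nat list" where "sl A \<equiv> sorted_list_of_set A"

lemma sl_lt_iff:
  assumes "i < card A" "j < card A"
  shows "sl A ! i < sl A ! j \<longleftrightarrow> i < j"
proof -
  have s: "sorted_wrt (<) (sl A)" by (rule strict_sorted_list_of_set)
  have l: "length (sl A) = card A" by simp
  show ?thesis
  proof
    assume "sl A ! i < sl A ! j"
    show "i < j"
    proof (rule ccontr)
      assume "\<not> i < j"
      then have "j = i \<or> j < i" by auto
      then show False using sorted_wrt_nth_less[OF s, of j i] assms l \<open>sl A ! i < sl A ! j\<close> by auto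
    qed
  next
    assume "i < j" then show "sl A ! i < sl A ! j" using sorted_wrt_nth_less[OF s, of i j] assms l by auto
  qed
qed

lemma sl_mem: "finite A \<Longrightarrow> i < card A \<Longrightarrow> sl A ! i \<in> A"
  by (metis length_sorted_list_of_set nth_mem set_sorted_list_of_set)

lemma sl_ex: "finite A \<Longrightarrow> a \<in> A \<Longrightarrow> \<exists>i < card A. sl A ! i = a"
  by (metis in_set_conv_nth length_sorted_list_of_set set_sorted_list_of_set)

lemma sl_less_card:
  assumes "finite A" "k < card A"
  shows "card {a\<in>A. a < sl A ! k} = k"
proof -
  have "{a\<in>A. a < sl A ! k} = (\<lambda>i. sl A ! i) ` {..<k}"
  proof
    show "{a\<in>A. a < sl A ! k} \<subseteq> (\<lambda>i. sl A ! i) ` {..<k}"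
    proof
      fix a assume "a \<in> {a\<in>A. a < sl A ! k}"
      then obtain i where "i < card A" "sl A ! i = a" "a < sl A ! k" using sl_ex[OF assms(1)] by blast
      then show "a \<in> (\<lambda>i. sl A ! i) ` {..<k}" using sl_lt_iff[of i A k] assms by auto
    qed
  next
    show "(\<lambda>i. sl A ! i) ` {..<k} \<subseteq> {a\<in>A. a < sl A ! k}"
      using sl_lt_iff[of _ A k] sl_mem[OF assms(1)] assms by auto
  qed
  moreover have "inj_on (\<lambda>i. sl A ! i) {..<k}"
    using assms by (intro inj_on_nth) auto
  ultimately show ?thesis by (simp add: card_image)
qed

lemma sl_nth_eq:
  assumes "finite A" "a \<in> A" "card {b\<in>A. b < a} = k"
  shows "k < card A \<and> sl A ! k = a"
proof -
  obtain i where i: "i < card A" "sl A ! i = a" using sl_ex[OF assms(1,2)] by blast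
  then have "card {b\<in>A. b < a} = i" using sl_less_card[OF assms(1) i(1)] by simp
  then show ?thesis using i assms(3) by simp
qed

lemma sl_dom:
  assumes "finite A" "finite B" "k < card A" "k < card B"
    and "\<forall>t. card {b\<in>B. b \<le> t} \<le> card {a\<in>A. a \<le> t}"
  shows "sl A ! k \<le> sl B ! k"
proof (rule ccontr)
  let ?t = "sl B ! k"
  assume "\<not> ?thesis"
  then have gt: "?t < sl A ! k" by simp
  have "insert ?t {b\<in>B. b < ?t} \<subseteq> {b\<in>B. b \<le> ?t}" using sl_mem[OF assms(2,4)] by auto
  moreover have "card (insert ?t {b\<in>B. b < ?t}) = k + 1"
    using sl_less_card[OF assms(2,4)] assms(2) by simp
  moreover have "card (insert ?t {b\<in>B. b < ?t}) \<le> card {b\<in>B. b \<le> ?t}"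
    by (rule card_mono) (use assms(2) sl_mem[OF assms(2,4)] in auto)
  ultimately have "k + 1 \<le> card {b\<in>B. b \<le> ?t}" by simp
  also have "\<dots> \<le> card {a\<in>A. a \<le> ?t}" using assms(5) by blast
  also have "\<dots> \<le> card {a\<in>A. a < sl A ! k}" using gt assms(1) by (intro card_mono) auto
  also have "\<dots> = k" using sl_less_card[OF assms(1,3)] .
  finally show False by simp
qed

lemma card_le_inj:
  assumes "finite X" "inj_on f X" "\<forall>a\<in>X. f a \<le> (a::nat)"
  shows "card {a\<in>X. a \<le> t} \<le> card {b\<in>f ` X. b \<le> t}"
proof -
  have "f ` {a\<in>X. a \<le> t} \<subseteq> {b\<in>f ` X. b \<le> t}" using assms(3) by force
  moreover have "card (f ` {a\<in>X. a \<le> t}) = card {a\<in>X. a \<le> t}"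
    using assms(2) by (intro card_image) (auto intro: inj_on_subset)
  moreover have "card (f ` {a\<in>X. a \<le> t}) \<le> card {b\<in>f ` X. b \<le> t}"
    by (rule card_mono) (use assms(1) assms(3) in force)+
  ultimately show ?thesis by simp
qed

lemma sl_subset:
  assumes "finite A" "B \<subseteq> A" "k < card B"
  shows "sl A ! k \<le> sl B ! k"
proof -
  have fB: "finite B" using assms finite_subset by blast
  have "card B \<le> card A" using assms card_mono by blast
  then show ?thesis using assms fB
    by (intro sl_dom) (auto intro!: card_mono)
qed

lemma sl_replace:
  assumes "finite A" "x \<in> A" "e \<notin> A" "\<forall>a\<in>A. a \<noteq> x \<longrightarrow> (a < e \<longleftrightarrow> a < x)" "k < card A"
  shows "sl (insert e (A - {x})) ! k = (if sl A ! k = x then e else sl A ! k)"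
proof -
  let ?A' = "insert e (A - {x})"
  have fA': "finite ?A'" using assms by simp
  have cA: "card ?A' = card A" using assms by (simp add: card_Diff_singleton)
  show ?thesis
  proof (cases "sl A ! k = x")
    case True
    have "{b\<in>?A'. b < e} = {b\<in>A. b < x}" using assms by auto
    then have "card {b\<in>?A'. b < e} = k" using sl_less_card[OF assms(1,5)] True by simp
    then show ?thesis using sl_nth_eq[OF fA', of e k] True by simp
  next
    case False
    let ?a = "sl A ! k"
    have aA: "?a \<in> A" using sl_mem assms by blast
    have ae: "?a \<noteq> e" using aA assms(3) by blast
    let ?g = "\<lambda>b. if b = x then e else b"
    have injg: "inj_on ?g A" using assms(3) by (auto intro!: inj_onI split: if_splits)
    have "e < ?a \<longleftrightarrow> x < ?a" using assms(4) aA False ae by auto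
    then have "{b\<in>?A'. b < ?a} = ?g ` {b\<in>A. b < ?a}" using assms(2) by auto
    moreover have "card (?g ` {b\<in>A. b < ?a}) = card {b\<in>A. b < ?a}"
      by (rule card_image) (rule inj_on_subset[OF injg], auto)
    ultimately have "card {b\<in>?A'. b < ?a} = card {b\<in>A. b < ?a}" by simp
    then have "card {b\<in>?A'. b < ?a} = k" using sl_less_card[OF assms(1,5)] by simp
    moreover have "?a \<in> ?A'" using aA False by simp
    ultimately show ?thesis using sl_nth_eq[OF fA', of ?a k] False by simp
  qed
qed

definition colkey :: "nat \<Rightarrow> (nat \<Rightarrow> nat) \<Rightarrow> (nat \<Rightarrow> nat set) \<Rightarrow> nat \<times> nat \<Rightarrow> int" where
  "colkey n lam C = (\<lambda>(j,i). if (j,i) \<in> boxes n lam then int (sl (C j) ! (i-1)) else 0)"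

lemma key_colkey: "key n lam \<pi> = colkey n lam (\<lambda>j. \<pi> ` {1..zeta n lam j})"
  unfolding key_def colkey_def ..

lemma in_boxes: "(j,i) \<in> boxes n lam \<longleftrightarrow> 1 \<le> j \<and> j \<le> lam 1 \<and> 1 \<le> i \<and> i \<le> zeta n lam j"
  by (simp add: boxes_def)

lemma colkey_in: "(j,i) \<in> boxes n lam \<Longrightarrow> colkey n lam C (j,i) = int (sl (C j) ! (i-1))"
  by (simp add: colkey_def)

definition goodfam :: "nat \<Rightarrow> (nat \<Rightarrow> nat) \<Rightarrow> (nat \<Rightarrow> nat set) \<Rightarrow> bool" where
  "goodfam n lam C \<longleftrightarrow> (\<forall>j. 1 \<le> j \<and> j \<le> lam 1 \<longrightarrow> finite (C j) \<and> card (C j) = zeta n lam j \<and> C j \<subseteq> {1..n})"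

definition nestedfam :: "nat \<Rightarrow> (nat \<Rightarrow> nat) \<Rightarrow> (nat \<Rightarrow> nat set) \<Rightarrow> bool" where
  "nestedfam n lam C \<longleftrightarrow> (\<forall>j j'. 1 \<le> j \<and> j \<le> j' \<and> j' \<le> lam 1 \<longrightarrow> C j' \<subseteq> C j)"

lemma colkey_strict:
  assumes "goodfam n lam C" "1 \<le> j" "j \<le> lam 1" "1 \<le> i" "i < i'" "i' \<le> zeta n lam j"
  shows "colkey n lam C (j,i) < colkey n lam C (j,i')"
proof -
  have c: "card (C j) = zeta n lam j" using assms(1-3) by (simp add: goodfam_def)
  have "sl (C j) ! (i-1) < sl (C j) ! (i'-1)" using sl_lt_iff[of "i-1" "C j" "i'-1"] c assms by simp
  then show ?thesis using assms by (simp add: colkey_def boxes_def)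
qed

lemma colkey_mem:
  assumes "goodfam n lam C" "(j,i) \<in> boxes n lam"
  shows "nat (colkey n lam C (j,i)) \<in> C j \<and> colkey n lam C (j,i) = int (nat (colkey n lam C (j,i)))"
proof -
  have "finite (C j)" "card (C j) = zeta n lam j" using assms by (auto simp: goodfam_def boxes_def)
  then show ?thesis using assms(2) sl_mem[of "C j" "i-1"] by (auto simp: colkey_def boxes_def)
qed

lemma colkey_ex:
  assumes "goodfam n lam C" "1 \<le> j" "j \<le> lam 1" "a \<in> C j"
  shows "\<exists>i. 1 \<le> i \<and> i \<le> zeta n lam j \<and> colkey n lam C (j,i) = int a"
proof -
  have f: "finite (C j)" "card (C j) = zeta n lam j" using assms by (auto simp: goodfam_def)
  obtain k where "k < card (C j)" "sl (C j) ! k = a" using sl_ex[OF f(1) assms(4)] by blast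
  then show ?thesis using f assms by (intro exI[of _ "Suc k"]) (simp add: colkey_def boxes_def)
qed

lemma colkey_tab:
  assumes "goodfam n lam C" "nestedfam n lam C"
  shows "colkey n lam C \<in> tableaux n lam"
  unfolding tableaux_def
proof (intro CollectI conjI allI impI ballI)
  fix p assume "p \<notin> boxes n lam" then show "colkey n lam C p = 0" by (cases p) (auto simp: colkey_def)
next
  fix p assume p: "p \<in> boxes n lam"
  obtain j i where ji: "p = (j,i)" by force
  have f: "finite (C j)" "card (C j) = zeta n lam j" "C j \<subseteq> {1..n}" using p ji assms(1) by (auto simp: goodfam_def boxes_def)
  have "sl (C j) ! (i-1) \<in> C j" using sl_mem[OF f(1)] f(2) p ji by (auto simp: boxes_def)
  then have "sl (C j) ! (i-1) \<in> {1..n}" using f(3) by blast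
  moreover have "colkey n lam C p = int (sl (C j) ! (i-1))" using p ji by (simp add: colkey_def)
  ultimately show "1 \<le> colkey n lam C p" "colkey n lam C p \<le> int n" by auto
next
  fix j i assume a: "(j, i) \<in> boxes n lam \<and> (j, i + 1) \<in> boxes n lam"
  then show "colkey n lam C (j, i) < colkey n lam C (j, i + 1)"
    using colkey_strict[OF assms(1), of j i "i+1"] by (auto simp: boxes_def)
next
  fix j i assume a: "(j, i) \<in> boxes n lam \<and> (j + 1, i) \<in> boxes n lam"
  have sub: "C (j+1) \<subseteq> C j" using assms(2) a by (auto simp: nestedfam_def boxes_def)
  have f: "finite (C j)" "card (C (j+1)) = zeta n lam (j+1)" using assms(1) a by (auto simp: goodfam_def boxes_def)
  have "sl (C j) ! (i-1) \<le> sl (C (j+1)) ! (i-1)" using sl_subset[OF f(1) sub] f(2) a by (auto simp: boxes_def)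
  then show "colkey n lam C (j, i) \<le> colkey n lam C (j + 1, i)" using a by (simp add: colkey_def)
qed

lemma ewis_aux_filter: "(\<forall>q\<in>set ps. snd q \<le> c) \<Longrightarrow> ewis_aux c ps = filter (\<lambda>q. snd q = c) ps"
  by (induction ps arbitrary: c) auto

lemma ewis_aux_last:
  "(\<forall>q\<in>set ps. snd q \<le> (if ewis_aux c ps = [] then c else snd (last (ewis_aux c ps)))) \<and>
   c \<le> (if ewis_aux c ps = [] then c else snd (last (ewis_aux c ps)))"
proof (induction ps arbitrary: c)
  case Nil then show ?case by simp
next
  case (Cons p ps)
  show ?case
  proof (cases "snd p \<ge> c")
    case True
    then show ?thesis using Cons.IH[of "snd p"] by (auto split: if_splits)
  next
    case False
    then show ?thesis using Cons.IH[of c] by (auto split: if_splits)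
  qed
qed

lemma ewis_last_ge:
  assumes "q \<in> set xs" shows "snd q \<le> snd (last (ewis xs))"
proof (cases xs)
  case Nil then show ?thesis using assms by simp
next
  case (Cons p ps)
  have h: "(\<forall>q\<in>set ps. snd q \<le> (if ewis_aux (snd p) ps = [] then snd p else snd (last (ewis_aux (snd p) ps)))) \<and>
    snd p \<le> (if ewis_aux (snd p) ps = [] then snd p else snd (last (ewis_aux (snd p) ps)))"
    by (rule ewis_aux_last)
  then show ?thesis using assms Cons by (auto split: if_splits)
qed

lemma ewis_max:
  assumes "\<forall>q\<in>set ps. snd q \<le> snd p"
  shows "ewis (p # ps) = filter (\<lambda>q. snd q = snd p) (p # ps)"
  using ewis_aux_filter[OF assms] by simp

definition Mof :: "nat \<Rightarrow> (nat \<Rightarrow> nat) \<Rightarrow> nat \<Rightarrow> (nat \<Rightarrow> nat) \<Rightarrow> (nat \<times> nat) set" where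
  "Mof n lam l m = {(j,i). l \<le> j \<and> j \<le> lam 1 \<and> m j < i \<and> i \<le> zeta n lam j}"

lemma Mof_unmarked:
  assumes "l \<le> j" "j \<le> lam 1" "m j \<le> zeta n lam j"
  shows "{i\<in>{1..zeta n lam j}. (j,i) \<notin> Mof n lam l m} = {1..m j}"
  using assms by (auto simp: Mof_def)

lemma scan_seq_Mof:
  assumes "\<And>j. l \<le> j \<Longrightarrow> j \<le> lam 1 \<Longrightarrow> m j \<le> zeta n lam j"
  shows "scan_seq n lam T l (Mof n lam l m) =
     map (\<lambda>j. ((j, m j), T (j, m j))) (filter (\<lambda>j. 1 \<le> m j) [l..<lam 1 + 1])"
proof -
  have hu: "has_unmarked n lam (Mof n lam l m) j \<longleftrightarrow> 1 \<le> m j" if "j \<in> set [l..<lam 1 + 1]" for j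
  proof -
    have "l \<le> j" "j \<le> lam 1" using that by auto
    then have "{i\<in>{1..zeta n lam j}. (j,i) \<notin> Mof n lam l m} = {1..m j}" using Mof_unmarked assms by blast
    then have E: "\<And>i. (i \<in> {1..zeta n lam j} \<and> (j,i) \<notin> Mof n lam l m) \<longleftrightarrow> i \<in> {1..m j}" by blast
    show ?thesis unfolding has_unmarked_def
    proof
      assume "\<exists>i\<in>{1..zeta n lam j}. (j, i) \<notin> Mof n lam l m"
      then obtain i where "i \<in> {1..zeta n lam j}" "(j, i) \<notin> Mof n lam l m" by blast
      then show "1 \<le> m j" using E[of i] by auto
    next
      assume "1 \<le> m j"
      then have "1 \<in> {1..zeta n lam j} \<and> (j,1) \<notin> Mof n lam l m" using E[of 1] by auto
      then show "\<exists>i\<in>{1..zeta n lam j}. (j, i) \<notin> Mof n lam l m" by blast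
    qed
  qed
  have lu: "lowest_unmarked n lam (Mof n lam l m) j = m j" if "j \<in> set [l..<lam 1 + 1]" "1 \<le> m j" for j
  proof -
    have "l \<le> j" "j \<le> lam 1" using that by auto
    then have "{i\<in>{1..zeta n lam j}. (j,i) \<notin> Mof n lam l m} = {1..m j}" using Mof_unmarked assms by blast
    then have "lowest_unmarked n lam (Mof n lam l m) j = Max {1..m j}" unfolding lowest_unmarked_def by simp
    also have "Max {1..m j} = m j" using that(2) by (intro Max_eqI) auto
    finally show ?thesis .
  qed
  have fe: "filter (has_unmarked n lam (Mof n lam l m)) [l..<lam 1 + 1] = filter (\<lambda>j. 1 \<le> m j) [l..<lam 1 + 1]"
    using hu by (intro filter_cong) auto
  show ?thesis unfolding scan_seq_def fe
  proof (rule map_cong[OF refl])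
    fix j assume "j \<in> set (filter (\<lambda>j. 1 \<le> m j) [l..<lam 1 + 1])"
    then have "j \<in> set [l..<lam 1 + 1]" "1 \<le> m j" by auto
    then show "((j, lowest_unmarked n lam (Mof n lam l m) j), T (j, lowest_unmarked n lam (Mof n lam l m) j)) = ((j, m j), T (j, m j))"
      using lu by simp
  qed
qed

declare upt_Suc[simp del]

lemma sim:
  fixes T :: "nat \<times> nat \<Rightarrow> int" and z :: int
  assumes strict: "\<And>j i i'. l \<le> j \<Longrightarrow> j \<le> lam 1 \<Longrightarrow> 1 \<le> i \<Longrightarrow> i < i' \<Longrightarrow> i' \<le> zeta n lam j \<Longrightarrow> T (j,i) < T (j,i')"
    and ll: "l \<le> lam 1"
  shows "\<And>m. m l = k \<Longrightarrow> (\<forall>j. l \<le> j \<and> j \<le> lam 1 \<longrightarrow> m j \<le> zeta n lam j) \<Longrightarrow>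
     (\<forall>j i. l \<le> j \<and> j \<le> lam 1 \<and> 1 \<le> i \<and> i \<le> m j \<longrightarrow> T (j,i) = z \<or> (\<exists>i'. 1 \<le> i' \<and> i' \<le> k \<and> T (l,i') = T (j,i))) \<Longrightarrow>
     (\<forall>i. 1 \<le> i \<and> i \<le> k \<and> (\<forall>i'. i \<le> i' \<and> i' \<le> k \<longrightarrow> z < T (l,i')) \<longrightarrow> scan_iter n lam T l k (Mof n lam l m) i = T (l,i)) \<and>
     (\<forall>i pz. 1 \<le> i \<and> i \<le> k \<and> l + 1 \<le> lam 1 \<and> 1 \<le> pz \<and> pz \<le> m (l+1) \<and> T (l+1,pz) = z \<and> (\<forall>i'. i < i' \<and> i' \<le> k \<longrightarrow> z < T (l,i')) \<longrightarrow> z \<le> scan_iter n lam T l k (Mof n lam l m) i)"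
proof (induction k)
  case 0 then show ?case by simp
next
  case (Suc k)
  fix m assume ml: "m l = Suc k" and mb: "\<forall>j. l \<le> j \<and> j \<le> lam 1 \<longrightarrow> m j \<le> zeta n lam j"
    and inv: "\<forall>j i. l \<le> j \<and> j \<le> lam 1 \<and> 1 \<le> i \<and> i \<le> m j \<longrightarrow> T (j,i) = z \<or> (\<exists>i'. 1 \<le> i' \<and> i' \<le> Suc k \<and> T (l,i') = T (j,i))"
  let ?M = "Mof n lam l m"
  let ?v = "T (l, Suc k)"
  let ?f = "\<lambda>j. ((j, m j), T (j, m j))"
  let ?rest = "map ?f (filter (\<lambda>j. 1 \<le> m j) [Suc l..<lam 1 + 1])"
  have seq: "scan_seq n lam T l ?M = ((l, Suc k), ?v) # ?rest"
  proof -
    have "[l..<lam 1 + 1] = l # [Suc l..<lam 1 + 1]" using ll by (simp add: upt_conv_Cons)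
    then show ?thesis using scan_seq_Mof[of l lam m n T] mb ml by simp
  qed
  let ?e = "ewis (scan_seq n lam T l ?M)"
  have it: "scan_iter n lam T l (Suc k) ?M = (scan_iter n lam T l k (?M \<union> set (map fst ?e))) (Suc k := snd (last ?e))"
    by (simp add: Let_def)
  have mlz: "m l \<le> zeta n lam l" using mb ll by auto
  have bnd: "T (j, m j) \<le> ?v" if zv: "z < ?v" and j: "l \<le> j" "j \<le> lam 1" "1 \<le> m j" for j
  proof -
    have "T (j, m j) = z \<or> (\<exists>i'. 1 \<le> i' \<and> i' \<le> Suc k \<and> T (l,i') = T (j, m j))" using inv j by auto
    then show ?thesis
    proof
      assume "T (j, m j) = z" then show ?thesis using zv by simp
    next
      assume "\<exists>i'. 1 \<le> i' \<and> i' \<le> Suc k \<and> T (l,i') = T (j, m j)"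
      then obtain i' where i': "1 \<le> i'" "i' \<le> Suc k" "T (l,i') = T (j, m j)" by blast
      show ?thesis
      proof (cases "i' = Suc k")
        case True then show ?thesis using i' by simp
      next
        case False
        then have "T (l,i') < T (l, Suc k)" using strict[of l i' "Suc k"] i' ll ml mlz by simp
        then show ?thesis using i' by simp
      qed
    qed
  qed
  define m' where "m' = (\<lambda>j. if l \<le> j \<and> j \<le> lam 1 \<and> 1 \<le> m j \<and> T (j, m j) = ?v then m j - 1 else m j)"
  have step: "?e = filter (\<lambda>q. snd q = ?v) (((l, Suc k), ?v) # ?rest) \<and> snd (last ?e) = ?v \<and>
     ?M \<union> set (map fst ?e) = Mof n lam l m' \<and> m' l = k \<and>
     (\<forall>j. l \<le> j \<and> j \<le> lam 1 \<longrightarrow> m' j \<le> zeta n lam j) \<and>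
     (\<forall>j i. l \<le> j \<and> j \<le> lam 1 \<and> 1 \<le> i \<and> i \<le> m' j \<longrightarrow> T (j,i) = z \<or> (\<exists>i'. 1 \<le> i' \<and> i' \<le> k \<and> T (l,i') = T (j,i)))"
    if zv: "z < ?v"
  proof (intro conjI)
    have rb: "\<forall>q\<in>set ?rest. snd q \<le> snd ((l, Suc k), ?v)" using bnd[OF zv] by auto
    show e: "?e = filter (\<lambda>q. snd q = ?v) (((l, Suc k), ?v) # ?rest)"
      unfolding seq using ewis_max[OF rb] by simp
    show "snd (last ?e) = ?v"
    proof -
      have "?e \<noteq> []" "\<forall>q\<in>set ?e. snd q = ?v" using e by auto
      then show ?thesis by (metis last_in_set)
    qed
    have se: "set (map fst ?e) = {(j, m j) | j. l \<le> j \<and> j \<le> lam 1 \<and> 1 \<le> m j \<and> T (j, m j) = ?v}"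
    proof -
      have "set (map fst ?e) = fst ` {q \<in> set (((l, Suc k), ?v) # ?rest). snd q = ?v}" unfolding e by (simp only: set_map set_filter)
      also have "\<dots> = {(j, m j) | j. l \<le> j \<and> j \<le> lam 1 \<and> 1 \<le> m j \<and> T (j, m j) = ?v}"
      proof
        show "fst ` {q \<in> set (((l, Suc k), ?v) # ?rest). snd q = ?v} \<subseteq> {(j, m j) | j. l \<le> j \<and> j \<le> lam 1 \<and> 1 \<le> m j \<and> T (j, m j) = ?v}"
          using ml ll by auto
        show "{(j, m j) | j. l \<le> j \<and> j \<le> lam 1 \<and> 1 \<le> m j \<and> T (j, m j) = ?v} \<subseteq> fst ` {q \<in> set (((l, Suc k), ?v) # ?rest). snd q = ?v}"
        proof
          fix p assume "p \<in> {(j, m j) | j. l \<le> j \<and> j \<le> lam 1 \<and> 1 \<le> m j \<and> T (j, m j) = ?v}"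
          then obtain j where j: "p = (j, m j)" "l \<le> j" "j \<le> lam 1" "1 \<le> m j" "T (j, m j) = ?v" by blast
          show "p \<in> fst ` {q \<in> set (((l, Suc k), ?v) # ?rest). snd q = ?v}"
          proof (cases "j = l")
            case True then show ?thesis using j ml by (simp add: image_iff)
          next
            case False
            then have "?f j \<in> set ?rest" using j by auto
            then show ?thesis using j by (auto simp: image_iff intro!: bexI[of _ "?f j"])
          qed
        qed
      qed
      finally show ?thesis .
    qed
    show "?M \<union> set (map fst ?e) = Mof n lam l m'"
    proof
      show "?M \<union> set (map fst ?e) \<subseteq> Mof n lam l m'"
        unfolding se using mb by (auto simp: Mof_def m'_def)
      show "Mof n lam l m' \<subseteq> ?M \<union> set (map fst ?e)"
      proof
        fix p assume p: "p \<in> Mof n lam l m'"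
        obtain j i where ji: "p = (j,i)" by force
        show "p \<in> ?M \<union> set (map fst ?e)"
        proof (cases "l \<le> j \<and> j \<le> lam 1 \<and> 1 \<le> m j \<and> T (j, m j) = ?v")
          case True
          then have "m j - 1 < i" "i \<le> zeta n lam j" using p ji by (auto simp: Mof_def m'_def)
          then have "m j < i \<or> i = m j" by auto
          then show ?thesis using True ji \<open>i \<le> zeta n lam j\<close> unfolding se by (auto simp: Mof_def)
        next
          case False
          then show ?thesis using p ji unfolding se by (auto simp: Mof_def m'_def)
        qed
      qed
    qed
    show "m' l = k" using ml ll by (simp add: m'_def)
    show "\<forall>j. l \<le> j \<and> j \<le> lam 1 \<longrightarrow> m' j \<le> zeta n lam j" using mb by (auto simp: m'_def)
    show "\<forall>j i. l \<le> j \<and> j \<le> lam 1 \<and> 1 \<le> i \<and> i \<le> m' j \<longrightarrow> T (j,i) = z \<or> (\<exists>i'. 1 \<le> i' \<and> i' \<le> k \<and> T (l,i') = T (j,i))"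
    proof (intro allI impI)
      fix j i assume a: "l \<le> j \<and> j \<le> lam 1 \<and> 1 \<le> i \<and> i \<le> m' j"
      then have im: "i \<le> m j" by (auto simp: m'_def split: if_splits)
      have mjz: "m j \<le> zeta n lam j" using mb a by auto
      have nv: "T (j,i) \<noteq> ?v"
      proof (cases "T (j, m j) = ?v")
        case True
        then have "i < m j" using a by (auto simp: m'_def split: if_splits)
        then have "T (j,i) < T (j, m j)" using strict[of j i "m j"] a mjz by simp
        then show ?thesis using True by simp
      next
        case False
        have "T (j, m j) \<le> ?v" using bnd[OF zv, of j] a im by simp
        show ?thesis
        proof (cases "i = m j")
          case True then show ?thesis using False by simp
        next
          case False
          then have "T (j,i) < T (j, m j)" using strict[of j i "m j"] a mjz im by simp
          then show ?thesis using \<open>T (j, m j) \<le> ?v\<close> by simp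
        qed
      qed
      have "T (j,i) = z \<or> (\<exists>i'. 1 \<le> i' \<and> i' \<le> Suc k \<and> T (l,i') = T (j,i))" using inv a im by auto
      then show "T (j,i) = z \<or> (\<exists>i'. 1 \<le> i' \<and> i' \<le> k \<and> T (l,i') = T (j,i))"
      proof
        assume "\<exists>i'. 1 \<le> i' \<and> i' \<le> Suc k \<and> T (l,i') = T (j,i)"
        then obtain i' where "1 \<le> i'" "i' \<le> Suc k" "T (l,i') = T (j,i)" by blast
        then have "i' \<noteq> Suc k" using nv by auto
        then show ?thesis using \<open>1 \<le> i'\<close> \<open>i' \<le> Suc k\<close> \<open>T (l,i') = T (j,i)\<close> by (intro disjI2) auto
      qed simp
    qed
  qed
  show "(\<forall>i. 1 \<le> i \<and> i \<le> Suc k \<and> (\<forall>i'. i \<le> i' \<and> i' \<le> Suc k \<longrightarrow> z < T (l,i')) \<longrightarrow> scan_iter n lam T l (Suc k) ?M i = T (l,i)) \<and>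
     (\<forall>i pz. 1 \<le> i \<and> i \<le> Suc k \<and> l + 1 \<le> lam 1 \<and> 1 \<le> pz \<and> pz \<le> m (l+1) \<and> T (l+1,pz) = z \<and> (\<forall>i'. i < i' \<and> i' \<le> Suc k \<longrightarrow> z < T (l,i')) \<longrightarrow> z \<le> scan_iter n lam T l (Suc k) ?M i)"
  proof (intro conjI allI impI)
    fix i assume a: "1 \<le> i \<and> i \<le> Suc k \<and> (\<forall>i'. i \<le> i' \<and> i' \<le> Suc k \<longrightarrow> z < T (l,i'))"
    then have zv: "z < ?v" by auto
    note st = step[OF zv]
    show "scan_iter n lam T l (Suc k) ?M i = T (l,i)"
    proof (cases "i = Suc k")
      case True
      have lv: "snd (last ?e) = ?v" using st by blast
      show ?thesis using it lv True by simp
    next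
      case False
      have IH: "(\<forall>i. 1 \<le> i \<and> i \<le> k \<and> (\<forall>i'. i \<le> i' \<and> i' \<le> k \<longrightarrow> z < T (l,i')) \<longrightarrow> scan_iter n lam T l k (Mof n lam l m') i = T (l,i))"
        using Suc.IH[of m'] st by blast
      have mo: "?M \<union> set (map fst ?e) = Mof n lam l m'" using st by blast
      have "scan_iter n lam T l (Suc k) ?M i = scan_iter n lam T l k (?M \<union> set (map fst ?e)) i" using it False by simp
      also have "\<dots> = scan_iter n lam T l k (Mof n lam l m') i" by (simp only: mo)
      also have "\<dots> = T (l,i)" using IH a False by auto
      finally show ?thesis .
    qed
  next
    fix i pz assume a: "1 \<le> i \<and> i \<le> Suc k \<and> l + 1 \<le> lam 1 \<and> 1 \<le> pz \<and> pz \<le> m (l+1) \<and> T (l+1,pz) = z \<and> (\<forall>i'. i < i' \<and> i' \<le> Suc k \<longrightarrow> z < T (l,i'))"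
    show "z \<le> scan_iter n lam T l (Suc k) ?M i"
    proof (cases "i = Suc k")
      case True
      have mz: "m (l+1) \<le> zeta n lam (l+1)" using mb a by auto
      have "T (l+1,pz) \<le> T (l+1, m (l+1))"
      proof (cases "pz = m (l+1)")
        case False then show ?thesis using strict[of "l+1" pz "m (l+1)"] a mz by simp
      qed simp
      moreover have "?f (l+1) \<in> set (scan_seq n lam T l ?M)" unfolding seq using a by auto
      then have "T (l+1, m (l+1)) \<le> snd (last ?e)" using ewis_last_ge by fastforce
      ultimately have "z \<le> snd (last ?e)" using a by simp
      then show ?thesis using it True by simp
    next
      case False
      then have zv: "z < ?v" using a by auto
      note st = step[OF zv]
      have pz': "pz \<le> m' (l+1)"
      proof (cases "T (l+1, m (l+1)) = ?v")
        case True
        have "pz \<noteq> m (l+1)" using True a zv by auto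
        then show ?thesis using a by (auto simp: m'_def)
      next
        case False then show ?thesis using a by (auto simp: m'_def)
      qed
      have IH: "(\<forall>i pz. 1 \<le> i \<and> i \<le> k \<and> l + 1 \<le> lam 1 \<and> 1 \<le> pz \<and> pz \<le> m' (l+1) \<and> T (l+1,pz) = z \<and> (\<forall>i'. i < i' \<and> i' \<le> k \<longrightarrow> z < T (l,i')) \<longrightarrow> z \<le> scan_iter n lam T l k (Mof n lam l m') i)"
        using Suc.IH[of m'] st by blast
      have mo: "?M \<union> set (map fst ?e) = Mof n lam l m'" using st by blast
      have "scan_iter n lam T l (Suc k) ?M i = scan_iter n lam T l k (?M \<union> set (map fst ?e)) i" using it False by simp
      also have "\<dots> = scan_iter n lam T l k (Mof n lam l m') i" by (simp only: mo)
      also have "z \<le> \<dots>"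
      proof -
        have "1 \<le> i \<and> i \<le> k \<and> l + 1 \<le> lam 1 \<and> 1 \<le> pz \<and> pz \<le> m' (l+1) \<and> T (l+1,pz) = z \<and> (\<forall>i'. i < i' \<and> i' \<le> k \<longrightarrow> z < T (l,i'))"
          using a False pz' by auto
        then show ?thesis using IH by blast
      qed
      finally show ?thesis .
    qed
  qed
qed

lemma Mof_zeta: "Mof n lam l (zeta n lam) = {}"
  by (auto simp: Mof_def)

lemma scanning_in: "(l,k) \<in> boxes n lam \<Longrightarrow> scanning n lam T (l,k) = scan_iter n lam T l (zeta n lam l) {} k"
  by (simp add: scanning_def)

lemma scan_key:
  assumes g: "goodfam n lam C" and nst: "nestedfam n lam C"
  shows "scanning n lam (colkey n lam C) = colkey n lam C"
proof
  fix p :: "nat \<times> nat"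
  obtain l k where p: "p = (l,k)" by force
  show "scanning n lam (colkey n lam C) p = colkey n lam C p"
  proof (cases "(l,k) \<in> boxes n lam")
    case False then show ?thesis using p by (simp add: scanning_def colkey_def)
  next
    case True
    let ?T = "colkey n lam C"
    have l: "1 \<le> l" "l \<le> lam 1" "1 \<le> k" "k \<le> zeta n lam l" using True by (auto simp: boxes_def)
    have strict: "\<And>j i i'. l \<le> j \<Longrightarrow> j \<le> lam 1 \<Longrightarrow> 1 \<le> i \<Longrightarrow> i < i' \<Longrightarrow> i' \<le> zeta n lam j \<Longrightarrow> ?T (j,i) < ?T (j,i')"
      using colkey_strict[OF g] l by auto
    have pos: "0 < ?T (l,i')" if "1 \<le> i'" "i' \<le> zeta n lam l" for i'
    proof -
      have f: "finite (C l)" "card (C l) = zeta n lam l" "C l \<subseteq> {1..n}" using g l by (auto simp: goodfam_def)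
      have "sl (C l) ! (i'-1) \<in> C l" using sl_mem[OF f(1)] f(2) that by auto
      then have "1 \<le> sl (C l) ! (i'-1)" using f(3) by auto
      then show ?thesis using that l by (simp add: colkey_def boxes_def)
    qed
    have inv: "\<forall>j i. l \<le> j \<and> j \<le> lam 1 \<and> 1 \<le> i \<and> i \<le> zeta n lam j \<longrightarrow> ?T (j,i) = 0 \<or> (\<exists>i'. 1 \<le> i' \<and> i' \<le> zeta n lam l \<and> ?T (l,i') = ?T (j,i))"
    proof (intro allI impI disjI2)
      fix j i assume a: "l \<le> j \<and> j \<le> lam 1 \<and> 1 \<le> i \<and> i \<le> zeta n lam j"
      have f: "finite (C j)" "card (C j) = zeta n lam j" using g a l by (auto simp: goodfam_def)
      have "sl (C j) ! (i-1) \<in> C j" using sl_mem[OF f(1)] f(2) a by auto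
      moreover have "C j \<subseteq> C l" using nst a l by (auto simp: nestedfam_def)
      ultimately have "sl (C j) ! (i-1) \<in> C l" by blast
      then obtain i' where "1 \<le> i'" "i' \<le> zeta n lam l" "?T (l,i') = int (sl (C j) ! (i-1))"
        using colkey_ex[OF g l(1,2)] by blast
      moreover have "?T (j,i) = int (sl (C j) ! (i-1))" using a l by (simp add: colkey_def boxes_def)
      ultimately show "\<exists>i'. 1 \<le> i' \<and> i' \<le> zeta n lam l \<and> ?T (l,i') = ?T (j,i)" by auto
    qed
    have S: "(\<forall>i. 1 \<le> i \<and> i \<le> zeta n lam l \<and> (\<forall>i'. i \<le> i' \<and> i' \<le> zeta n lam l \<longrightarrow> 0 < ?T (l,i')) \<longrightarrow> scan_iter n lam ?T l (zeta n lam l) (Mof n lam l (zeta n lam)) i = ?T (l,i))"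
      using sim[where l=l and lam=lam and n=n and T="?T" and k="zeta n lam l" and m="zeta n lam" and z=0, OF strict l(2) refl _ inv] by blast
    have "scan_iter n lam ?T l (zeta n lam l) {} k = ?T (l,k)"
      using S[rule_format, of k] pos l unfolding Mof_zeta by auto
    then show ?thesis using p True by (simp add: scanning_def)
  qed
qed

lemma colkey_in_D:
  assumes g: "goodfam n lam C" and nst: "nestedfam n lam C"
    and le: "\<forall>p\<in>boxes n lam. colkey n lam C p \<le> key n lam \<pi> p"
  shows "colkey n lam C \<in> Dset n lam \<pi>"
  unfolding Dset_def tab_le_def using colkey_tab[OF g nst] scan_key[OF g nst] le by simp

lemma violation:
  fixes z :: nat
  assumes g: "goodfam n lam C" and l: "1 \<le> l" "l + 1 \<le> lam 1"
    and sub: "\<forall>j. l \<le> j \<and> j \<le> lam 1 \<longrightarrow> C j \<subseteq> insert z (C l)"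
    and zin: "z \<in> C (l+1)"
    and i0: "1 \<le> i0" "i0 \<le> zeta n lam l"
    and above: "\<forall>i'. i0 < i' \<and> i' \<le> zeta n lam l \<longrightarrow> int z < colkey n lam C (l,i')"
  shows "int z \<le> scanning n lam (colkey n lam C) (l,i0)"
proof -
  let ?T = "colkey n lam C"
  have ll: "l \<le> lam 1" using l by simp
  have strict: "\<And>j i i'. l \<le> j \<Longrightarrow> j \<le> lam 1 \<Longrightarrow> 1 \<le> i \<Longrightarrow> i < i' \<Longrightarrow> i' \<le> zeta n lam j \<Longrightarrow> ?T (j,i) < ?T (j,i')"
    using colkey_strict[OF g] l by auto
  have inv: "\<forall>j i. l \<le> j \<and> j \<le> lam 1 \<and> 1 \<le> i \<and> i \<le> zeta n lam j \<longrightarrow> ?T (j,i) = int z \<or> (\<exists>i'. 1 \<le> i' \<and> i' \<le> zeta n lam l \<and> ?T (l,i') = ?T (j,i))"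
  proof (intro allI impI)
    fix j i assume a: "l \<le> j \<and> j \<le> lam 1 \<and> 1 \<le> i \<and> i \<le> zeta n lam j"
    have f: "finite (C j)" "card (C j) = zeta n lam j" using g a l by (auto simp: goodfam_def)
    have "sl (C j) ! (i-1) \<in> C j" using sl_mem[OF f(1)] f(2) a by auto
    then have "sl (C j) ! (i-1) \<in> insert z (C l)" using sub a by blast
    moreover have Tj: "?T (j,i) = int (sl (C j) ! (i-1))" using a l by (simp add: colkey_def boxes_def)
    ultimately show "?T (j,i) = int z \<or> (\<exists>i'. 1 \<le> i' \<and> i' \<le> zeta n lam l \<and> ?T (l,i') = ?T (j,i))"
    proof (cases "sl (C j) ! (i-1) = z")
      case False
      then have "sl (C j) ! (i-1) \<in> C l" using \<open>sl (C j) ! (i-1) \<in> insert z (C l)\<close> by blast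
      then obtain i' where "1 \<le> i'" "i' \<le> zeta n lam l" "?T (l,i') = int (sl (C j) ! (i-1))"
        using colkey_ex[OF g l(1) ll] by blast
      then show ?thesis using Tj by auto
    qed (simp add: Tj)
  qed
  obtain pz where pz: "1 \<le> pz" "pz \<le> zeta n lam (l+1)" "?T (l+1,pz) = int z"
    using colkey_ex[OF g _ l(2) zin] by auto
  have S: "(\<forall>i pz. 1 \<le> i \<and> i \<le> zeta n lam l \<and> l + 1 \<le> lam 1 \<and> 1 \<le> pz \<and> pz \<le> zeta n lam (l+1) \<and> ?T (l+1,pz) = int z \<and> (\<forall>i'. i < i' \<and> i' \<le> zeta n lam l \<longrightarrow> int z < ?T (l,i')) \<longrightarrow> int z \<le> scan_iter n lam ?T l (zeta n lam l) (Mof n lam l (zeta n lam)) i)"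
    using sim[where l=l and lam=lam and n=n and T="?T" and k="zeta n lam l" and m="zeta n lam" and z="int z", OF strict ll refl _ inv] by blast
  have "int z \<le> scan_iter n lam ?T l (zeta n lam l) {} i0"
    using S[rule_format, of i0 pz] pz i0 l above unfolding Mof_zeta by auto
  moreover have "(l,i0) \<in> boxes n lam" using l i0 by (simp add: boxes_def)
  ultimately show ?thesis by (simp add: scanning_def)
qed

lemma zeta_anti: "j \<le> j' \<Longrightarrow> zeta n lam j' \<le> zeta n lam j"
  unfolding zeta_def by (rule card_mono) auto

lemma zeta_le: "zeta n lam j \<le> n"
proof -
  have "zeta n lam j \<le> card {1..n}" unfolding zeta_def by (rule card_mono) auto
  then show ?thesis by simp
qed

lemma K_card: "inj_on \<pi> {1..n} \<Longrightarrow> t \<le> n \<Longrightarrow> card (\<pi> ` {1..t}) = t"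
  by (subst card_image) (auto intro: inj_on_subset)

lemma fam_good:
  fixes \<pi> \<psi> :: "nat \<Rightarrow> nat"
  assumes inj: "inj_on \<pi> {1..n}" and img: "\<pi> ` {1..n} \<subseteq> {1..n}"
    and dich: "\<forall>j. 1 \<le> j \<and> j \<le> lam 1 \<longrightarrow> q \<le> zeta n lam j \<or> zeta n lam j \<le> p"
    and pq: "p < q"
    and pinj: "inj_on \<psi> (\<pi> ` {1..p})" and prange: "\<psi> ` (\<pi> ` {1..p}) \<subseteq> {1..n}"
  shows "goodfam n lam (\<lambda>j. if q \<le> zeta n lam j then \<pi> ` {1..zeta n lam j} else \<psi> ` \<pi> ` {1..zeta n lam j})"
  unfolding goodfam_def
proof (intro allI impI)
  fix j assume j: "1 \<le> j \<and> j \<le> lam 1"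
  let ?t = "zeta n lam j"
  have tn: "?t \<le> n" by (rule zeta_le)
  have Kc: "card (\<pi> ` {1..?t}) = ?t" using K_card[OF inj tn] .
  have Ks: "\<pi> ` {1..?t} \<subseteq> {1..n}" using img tn by auto
  show "finite (if q \<le> ?t then \<pi> ` {1..?t} else \<psi> ` \<pi> ` {1..?t}) \<and>
         card (if q \<le> ?t then \<pi> ` {1..?t} else \<psi> ` \<pi> ` {1..?t}) = ?t \<and>
         (if q \<le> ?t then \<pi> ` {1..?t} else \<psi> ` \<pi> ` {1..?t}) \<subseteq> {1..n}"
  proof (cases "q \<le> ?t")
    case True then show ?thesis using Kc Ks by simp
  next
    case False
    then have tp: "?t \<le> p" using dich j by auto
    then have sub: "\<pi> ` {1..?t} \<subseteq> \<pi> ` {1..p}" by auto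
    have "card (\<psi> ` \<pi> ` {1..?t}) = ?t" using card_image[OF inj_on_subset[OF pinj sub]] Kc by simp
    moreover have "\<psi> ` \<pi> ` {1..?t} \<subseteq> {1..n}" using prange sub by blast
    ultimately show ?thesis using False by simp
  qed
qed

lemma fam_nested:
  fixes \<pi> \<psi> :: "nat \<Rightarrow> nat"
  assumes dich: "\<forall>j. 1 \<le> j \<and> j \<le> lam 1 \<longrightarrow> q \<le> zeta n lam j \<or> zeta n lam j \<le> p"
    and pq: "p < q"
    and prange: "\<psi> ` (\<pi> ` {1..p}) \<subseteq> \<pi> ` {1..q}"
  shows "nestedfam n lam (\<lambda>j. if q \<le> zeta n lam j then \<pi> ` {1..zeta n lam j} else \<psi> ` \<pi> ` {1..zeta n lam j})"
  unfolding nestedfam_def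
proof (intro allI impI)
  fix j j' assume a: "1 \<le> j \<and> j \<le> j' \<and> j' \<le> lam 1"
  have z: "zeta n lam j' \<le> zeta n lam j" using a zeta_anti by blast
  have d: "q \<le> zeta n lam j \<or> zeta n lam j \<le> p" "q \<le> zeta n lam j' \<or> zeta n lam j' \<le> p" using dich a by auto
  show "(if q \<le> zeta n lam j' then \<pi> ` {1..zeta n lam j'} else \<psi> ` \<pi> ` {1..zeta n lam j'})
       \<subseteq> (if q \<le> zeta n lam j then \<pi> ` {1..zeta n lam j} else \<psi> ` \<pi> ` {1..zeta n lam j})"
  proof (cases "q \<le> zeta n lam j'")
    case True
    then have "q \<le> zeta n lam j" using z by simp
    then show ?thesis using True z by auto
  next
    case False
    then have s': "zeta n lam j' \<le> p" using d by auto
    show ?thesis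
    proof (cases "q \<le> zeta n lam j")
      case True
      have "\<psi> ` \<pi> ` {1..zeta n lam j'} \<subseteq> \<psi> ` \<pi> ` {1..p}" using s' by auto
      also have "\<dots> \<subseteq> \<pi> ` {1..q}" using prange .
      also have "\<dots> \<subseteq> \<pi> ` {1..zeta n lam j}" using True by auto
      finally show ?thesis using True False by simp
    next
      case False2: False
      then show ?thesis using False z by auto
    qed
  qed
qed

lemma fam_dom:
  fixes \<pi> \<psi> :: "nat \<Rightarrow> nat"
  assumes inj: "inj_on \<pi> {1..n}"
    and dich: "\<forall>j. 1 \<le> j \<and> j \<le> lam 1 \<longrightarrow> q \<le> zeta n lam j \<or> zeta n lam j \<le> p"
    and pinj: "inj_on \<psi> (\<pi> ` {1..p})" and le: "\<forall>u\<in>\<pi> ` {1..p}. \<psi> u \<le> u"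
  shows "\<forall>pp\<in>boxes n lam. colkey n lam (\<lambda>j. if q \<le> zeta n lam j then \<pi> ` {1..zeta n lam j} else \<psi> ` \<pi> ` {1..zeta n lam j}) pp \<le> key n lam \<pi> pp"
proof
  fix pp assume pp: "pp \<in> boxes n lam"
  obtain j i where ji: "pp = (j,i)" by force
  have b: "1 \<le> j" "j \<le> lam 1" "1 \<le> i" "i \<le> zeta n lam j" using pp ji by (auto simp: boxes_def)
  let ?t = "zeta n lam j"
  let ?K = "\<pi> ` {1..?t}"
  have Kc: "card ?K = ?t" using K_card[OF inj zeta_le] .
  show "colkey n lam (\<lambda>j. if q \<le> zeta n lam j then \<pi> ` {1..zeta n lam j} else \<psi> ` \<pi> ` {1..zeta n lam j}) pp \<le> key n lam \<pi> pp"
  proof (cases "q \<le> ?t")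
    case True then show ?thesis using pp ji by (simp add: colkey_def key_def)
  next
    case False
    then have tp: "?t \<le> p" using dich b by auto
    then have sub: "?K \<subseteq> \<pi> ` {1..p}" by auto
    have ij: "inj_on \<psi> ?K" using inj_on_subset[OF pinj sub] .
    have c2: "card (\<psi> ` ?K) = ?t" using card_image[OF ij] Kc by simp
    have "sl (\<psi> ` ?K) ! (i-1) \<le> sl ?K ! (i-1)"
    proof (rule sl_dom)
      show "finite (\<psi> ` ?K)" "finite ?K" by auto
      show "i - 1 < card (\<psi> ` ?K)" "i - 1 < card ?K" using c2 Kc b by auto
      show "\<forall>t. card {b \<in> ?K. b \<le> t} \<le> card {a \<in> \<psi> ` ?K. a \<le> t}"
        using card_le_inj[of ?K \<psi>] ij le sub by blast
    qed
    then show ?thesis using pp ji False by (simp add: colkey_def key_def)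
  qed
qed

lemma convex_comb:
  assumes cp: "convex_polytope_Z B D" and U: "U \<in> D" and V: "V \<in> D"
    and W: "\<forall>p. real_of_int (W p) = \<alpha> * real_of_int (U p) + \<beta> * real_of_int (V p)"
    and ab: "0 \<le> \<alpha>" "0 \<le> \<beta>" "\<alpha> + \<beta> = 1"
    and Wz: "\<forall>p. p \<notin> B \<longrightarrow> W p = 0"
  shows "W \<in> D"
proof -
  obtain A :: "((nat \<times> nat \<Rightarrow> real) \<times> real) set" where
    D: "D = {x. (\<forall>p. p \<notin> B \<longrightarrow> x p = 0) \<and> (\<forall>(a, b) \<in> A. (\<Sum>p \<in> B. a p * real_of_int (x p)) \<le> b)}"
    using cp unfolding convex_polytope_Z_def by blast
  have "\<forall>(a, b) \<in> A. (\<Sum>p \<in> B. a p * real_of_int (W p)) \<le> b"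
  proof (intro ballI, clarify)
    fix a b assume ab': "(a,b) \<in> A"
    have u: "(\<Sum>p \<in> B. a p * real_of_int (U p)) \<le> b" using U ab' unfolding D by blast
    have v: "(\<Sum>p \<in> B. a p * real_of_int (V p)) \<le> b" using V ab' unfolding D by blast
    have "(\<Sum>p \<in> B. a p * real_of_int (W p)) = \<alpha> * (\<Sum>p \<in> B. a p * real_of_int (U p)) + \<beta> * (\<Sum>p \<in> B. a p * real_of_int (V p))"
    proof -
      have "(\<Sum>p \<in> B. a p * real_of_int (W p)) = (\<Sum>p \<in> B. \<alpha> * (a p * real_of_int (U p)) + \<beta> * (a p * real_of_int (V p)))"
        by (rule sum.cong[OF refl]) (simp add: W algebra_simps)
      then show ?thesis by (simp add: sum.distrib sum_distrib_left)
    qed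
    also have "\<dots> \<le> \<alpha> * b + \<beta> * b" using u v ab by (intro add_mono mult_left_mono) auto
    also have "\<dots> = (\<alpha> + \<beta>) * b" by (simp add: algebra_simps)
    also have "\<dots> = b" using ab(3) by simp
    finally show "(\<Sum>p \<in> B. a p * real_of_int (W p)) \<le> b" .
  qed
  then show ?thesis unfolding D using Wz by blast
qed

lemma phi_props:
  fixes Q S :: "nat set" and y z w x v1 :: nat
  assumes fQ: "finite Q" and SQ: "S \<subseteq> Q" and yQ: "y \<in> Q" and yS: "y \<notin> S" and yz: "y < z" and zQ: "z \<notin> Q"
    and wQ: "w \<in> Q" and wz: "w < z" and wmax: "\<forall>u\<in>Q. u < z \<longrightarrow> u \<le> w"
    and xQ: "x \<in> Q" and zx: "z < x" and xmin: "\<forall>u\<in>Q. z < u \<longrightarrow> x \<le> u"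
    and v1S: "v1 \<in> S" and zv1: "z < v1" and v1min: "\<forall>s\<in>S. z < s \<longrightarrow> v1 \<le> s"
  defines "pred \<equiv> \<lambda>u. Max {u'\<in>Q. u' < u}"
  defines "\<phi> \<equiv> \<lambda>u. if y < u \<and> u \<le> w then pred u else if u = v1 then x else u"
  shows "(\<forall>u\<in>S. \<phi> u \<le> u) \<and> \<phi> ` S \<subseteq> Q \<and> inj_on \<phi> S \<and> w \<notin> \<phi> ` S \<and> \<phi> v1 = x"
proof -
  have predf: "pred u \<in> Q \<and> pred u < u \<and> y \<le> pred u \<and> (\<forall>u'\<in>Q. u' < u \<longrightarrow> u' \<le> pred u)" if "y < u" for u
  proof -
    have f: "finite {u'\<in>Q. u' < u}" using fQ by simp
    have ne: "y \<in> {u'\<in>Q. u' < u}" using yQ that by simp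
    have "pred u \<in> {u'\<in>Q. u' < u}" unfolding pred_def using Max_in[OF f] ne by blast
    moreover have "\<forall>u'\<in>Q. u' < u \<longrightarrow> u' \<le> pred u" unfolding pred_def using Max_ge[OF f] by blast
    ultimately show ?thesis using ne by auto
  qed
  have xv1: "x \<le> v1" using xmin v1S SQ zv1 by blast
  have cls: "(y < u \<and> u \<le> w \<and> \<phi> u = pred u \<and> y \<le> \<phi> u \<and> \<phi> u < w \<and> \<phi> u < u \<and> \<phi> u \<in> Q) \<or> (u = v1 \<and> \<phi> u = x) \<or>
      (\<phi> u = u \<and> u < y) \<or> (\<phi> u = u \<and> v1 < u)" if uS: "u \<in> S" for u
  proof (cases "y < u \<and> u \<le> w")
    case True
    then show ?thesis using predf[of u] unfolding \<phi>_def by auto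
  next
    case False
    show ?thesis
    proof (cases "u = v1")
      case True then show ?thesis using False unfolding \<phi>_def by auto
    next
      case F2: False
      have ph: "\<phi> u = u" using False F2 unfolding \<phi>_def by auto
      have "u \<noteq> y" using uS yS by blast
      moreover have "w < u \<Longrightarrow> v1 < u"
      proof -
        assume wu: "w < u"
        have "u \<in> Q" using uS SQ by blast
        then have "\<not> u < z" using wmax wu by auto
        moreover have "u \<noteq> z" using \<open>u \<in> Q\<close> zQ by blast
        ultimately have "z < u" by simp
        then have "v1 \<le> u" using v1min uS by blast
        then show "v1 < u" using F2 by simp
      qed
      ultimately show ?thesis using ph False by auto
    qed
  qed
  have v1w: "w < v1" using wz zv1 by simp
  have phv1: "\<phi> v1 = x" unfolding \<phi>_def using v1w by auto
  have le: "\<forall>u\<in>S. \<phi> u \<le> u"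
  proof
    fix u assume "u \<in> S" then show "\<phi> u \<le> u" using cls[of u] xv1 by auto
  qed
  have rng: "\<phi> ` S \<subseteq> Q"
  proof
    fix t assume "t \<in> \<phi> ` S"
    then obtain u where u: "u \<in> S" "t = \<phi> u" by blast
    then show "t \<in> Q" using cls[of u] xQ SQ by auto
  qed
  have nw: "w \<notin> \<phi> ` S"
  proof
    assume "w \<in> \<phi> ` S"
    then obtain u where u: "u \<in> S" "w = \<phi> u" by blast
    have "y \<le> w" using wmax yQ yz by blast
    then show False using cls[OF u(1)] u(2) zx wz xv1 v1w by auto
  qed
  have inj: "inj_on \<phi> S"
  proof (rule inj_onI)
    fix u1 u2 assume u: "u1 \<in> S" "u2 \<in> S" "\<phi> u1 = \<phi> u2"
    have yw: "y \<le> w" using wmax yQ yz by blast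
    have pm: "pred a < pred b" if "a \<in> Q" "b \<in> Q" "y < a" "a < b" for a b
      using predf[of a] predf[of b] that by fastforce
    show "u1 = u2"
    proof (rule ccontr)
      assume ne: "u1 \<noteq> u2"
      have c1: "(y < u1 \<and> u1 \<le> w \<and> \<phi> u1 = pred u1 \<and> y \<le> \<phi> u1 \<and> \<phi> u1 < w \<and> \<phi> u1 < u1 \<and> \<phi> u1 \<in> Q) \<or> (u1 = v1 \<and> \<phi> u1 = x) \<or>
      (\<phi> u1 = u1 \<and> u1 < y) \<or> (\<phi> u1 = u1 \<and> v1 < u1)" using cls u(1) by blast
      have c2: "(y < u2 \<and> u2 \<le> w \<and> \<phi> u2 = pred u2 \<and> y \<le> \<phi> u2 \<and> \<phi> u2 < w \<and> \<phi> u2 < u2 \<and> \<phi> u2 \<in> Q) \<or> (u2 = v1 \<and> \<phi> u2 = x) \<or>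
      (\<phi> u2 = u2 \<and> u2 < y) \<or> (\<phi> u2 = u2 \<and> v1 < u2)" using cls u(2) by blast
      have Q1: "u1 \<in> Q" "u2 \<in> Q" using u SQ by auto
      have "u1 < u2 \<or> u2 < u1" using ne by auto
      then show False
      proof
        assume lt: "u1 < u2"
        show False using c1 c2 u(3) lt pm[OF Q1 _ lt] xv1 zx wz yw v1w by auto
      next
        assume lt: "u2 < u1"
        show False using c1 c2 u(3) lt pm[OF Q1(2,1) _ lt] xv1 zx wz yw v1w by auto
      qed
    qed
  qed
  show ?thesis using le rng inj nw phv1 by blast
qed

lemma gimg:
  assumes "finite A" "e \<notin> A" "\<forall>a\<in>A. a \<noteq> x \<longrightarrow> (a < e \<longleftrightarrow> a < x)" "k < card A"
  shows "sl ((\<lambda>t. if t = x then e else t) ` A) ! k = (if sl A ! k = x then e else sl A ! k)"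
proof (cases "x \<in> A")
  case True
  have "(\<lambda>t. if t = x then e else t) ` A = insert e (A - {x})" using True by auto
  then show ?thesis using sl_replace[OF assms(1) True assms(2,3,4)] by simp
next
  case False
  have "(\<lambda>t. if t = x then e else t) ` A = A" using False by (auto simp: image_iff)
  moreover have "sl A ! k \<noteq> x" using sl_mem[OF assms(1,4)] False by auto
  ultimately show ?thesis by simp
qed

lemma rank_facts:
  assumes fQ: "finite Q" and zQ: "(z::nat) \<notin> Q" and k0: "k0 = card {u\<in>Q. u < z}"
  shows "(1 \<le> k0 \<longrightarrow> sl Q ! (k0-1) < z) \<and> (\<forall>i'. k0 < i' \<and> i' \<le> card Q \<longrightarrow> z < sl Q ! (i'-1))"
proof (intro conjI impI allI)
  assume k1: "1 \<le> k0"
  have kc: "k0 \<le> card Q" unfolding k0 using fQ by (intro card_mono) auto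
  show "sl Q ! (k0-1) < z"
  proof (rule ccontr)
    assume "\<not> ?thesis"
    then have "{u\<in>Q. u < z} \<subseteq> {u\<in>Q. u < sl Q ! (k0-1)}" by auto
    then have "card {u\<in>Q. u < z} \<le> card {u\<in>Q. u < sl Q ! (k0-1)}" using fQ by (intro card_mono) auto
    also have "\<dots> = k0 - 1" using sl_less_card[OF fQ, of "k0-1"] k1 kc by simp
    finally show False using k0 k1 by simp
  qed
next
  fix i' assume a: "k0 < i' \<and> i' \<le> card Q"
  let ?s = "sl Q ! (i'-1)"
  have "i' - 1 < card Q" using a by arith
  then have sQ: "?s \<in> Q" using sl_mem[OF fQ] by blast
  show "z < ?s"
  proof (rule ccontr)
    assume "\<not> ?thesis"
    then have "?s < z" using sQ zQ by (cases "?s = z") auto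
    then have "insert ?s {u\<in>Q. u < ?s} \<subseteq> {u\<in>Q. u < z}" using sQ by auto
    then have "card (insert ?s {u\<in>Q. u < ?s}) \<le> card {u\<in>Q. u < z}" using fQ by (intro card_mono) auto
    moreover have "card (insert ?s {u\<in>Q. u < ?s}) = i'" using sl_less_card[OF fQ \<open>i' - 1 < card Q\<close>] a fQ by simp
    ultimately show False using a k0 by simp
  qed
qed

theorem theorem7p1:
  fixes n :: nat and lam \<pi> :: "nat \<Rightarrow> nat"
  assumes "n \<ge> 1"
    and "is_partition n lam"
    and "R_permutation n lam \<pi>"
    and "convex_polytope_Z (boxes n lam) (Dset n lam \<pi>)"
  shows "R_312_avoiding n lam \<pi>"
proof -
  have bij: "bij_betw \<pi> {1..n} {1..n}" using assms(3) by (simp add: R_permutation_def)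
  have inj: "inj_on \<pi> {1..n}" and img: "\<pi> ` {1..n} = {1..n}" using bij by (auto simp: bij_betw_def)
  have cp: "convex_polytope_Z (boxes n lam) (Dset n lam \<pi>)" using assms(4) .
  show ?thesis unfolding R_312_avoiding_def
  proof
    assume "R_312_containing n lam \<pi>"
    then obtain h a b c where h: "h \<in> {1..rR n lam - 1}" and abc: "1 \<le> a" "a \<le> qR n lam h" "qR n lam h < b"
      "b \<le> qR n lam (h+1)" "qR n lam (h+1) < c" "c \<le> n" "\<pi> b < \<pi> c" "\<pi> c < \<pi> a"
      unfolding R_312_containing_def by blast
    define R where "R = Rset n lam"
    have Rmem: "t \<in> R \<longleftrightarrow> (\<exists>j. t = zeta n lam j \<and> 1 \<le> j \<and> j \<le> lam 1 \<and> zeta n lam j < n)" for t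
      unfolding R_def Rset_def by blast
    have finR: "finite R"
    proof (rule finite_subset)
      show "R \<subseteq> {..<n}" using Rmem by auto
    qed simp
    have hr: "1 \<le> h" "h + 1 \<le> card R" using h by (auto simp: rR_def R_def)
    obtain h' where h': "h = Suc h'" using hr by (cases h) auto
    have lenR: "length (sl R) = card R" by simp
    have qh: "qR n lam h = sl R ! h'"
      unfolding qR_def R_def[symmetric] h' using hr h' lenR by (simp add: nth_append)
    have qh1: "qR n lam (h+1) = sl R ! (Suc h')"
      unfolding qR_def R_def[symmetric] h' using hr h' lenR by (simp add: nth_append)
    define p where "p = sl R ! h'"
    define q where "q = sl R ! (Suc h')"
    have pR: "p \<in> R" unfolding p_def using sl_mem[OF finR] hr h' by simp
    have qRm: "q \<in> R" unfolding q_def using sl_mem[OF finR] hr h' by simp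
    have pq: "p < q" unfolding p_def q_def using sl_lt_iff[of h' R "Suc h'"] hr h' by simp
    have gap: "\<not> (p < t \<and> t < q)" if tR: "t \<in> R" for t
    proof
      assume a: "p < t \<and> t < q"
      obtain i where i: "i < card R" "sl R ! i = t" using sl_ex[OF finR tR] by blast
      have "h' < i" using sl_lt_iff[of h' R i] i a hr h' unfolding p_def by simp
      moreover have "i < Suc h'" using sl_lt_iff[of i R "Suc h'"] i a hr h' unfolding q_def by simp
      ultimately show False by simp
    qed
    have qn: "q < n" using qRm Rmem by auto
    obtain jq where jq: "1 \<le> jq" "jq \<le> lam 1" "zeta n lam jq = q" using qRm Rmem by auto
    obtain jp where jp: "1 \<le> jp" "jp \<le> lam 1" "zeta n lam jp = p" using pR Rmem by auto
    have dich: "\<forall>j. 1 \<le> j \<and> j \<le> lam 1 \<longrightarrow> q \<le> zeta n lam j \<or> zeta n lam j \<le> p"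
    proof (intro allI impI)
      fix j assume j: "1 \<le> j \<and> j \<le> lam 1"
      show "q \<le> zeta n lam j \<or> zeta n lam j \<le> p"
      proof (cases "q \<le> zeta n lam j")
        case False
        then have "zeta n lam j \<in> R" using Rmem j qn by auto
        then show ?thesis using gap False by fastforce
      qed simp
    qed
    define L where "L = {j\<in>{1..lam 1}. zeta n lam j = q}"
    define l where "l = Max L"
    have finL: "finite L" unfolding L_def by simp
    have jqL: "jq \<in> L" unfolding L_def using jq by simp
    then have "L \<noteq> {}" by blast
    then have lL: "l \<in> L" unfolding l_def using Max_in[OF finL] by blast
    have l: "1 \<le> l" "l \<le> lam 1" "zeta n lam l = q" using lL unfolding L_def by auto
    have lmax: "j \<le> l" if "j \<in> L" for j unfolding l_def using Max_ge[OF finL that] .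
    have ljp: "l < jp"
    proof (rule ccontr)
      assume "\<not> l < jp" then have "zeta n lam l \<le> zeta n lam jp" using zeta_anti[of jp l n lam] by simp
      then show False using l jp pq by simp
    qed
    have l1: "l + 1 \<le> lam 1" using ljp jp by simp
    have zl1: "zeta n lam (l+1) = p"
    proof -
      have "zeta n lam (l+1) \<le> q" using zeta_anti[of l "l+1" n lam] l by simp
      moreover have "zeta n lam (l+1) \<noteq> q" using lmax[of "l+1"] l1 unfolding L_def by auto
      moreover have "p \<le> zeta n lam (l+1)" using zeta_anti[of "l+1" jp n lam] ljp jp by simp
      moreover have "q \<le> zeta n lam (l+1) \<or> zeta n lam (l+1) \<le> p" using dich l1 by simp
      ultimately show ?thesis by linarith
    qed
    define Q where "Q = \<pi> ` {1..q}"
    define S where "S = \<pi> ` {1..p}"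
    have fQ: "finite Q" unfolding Q_def by simp
    have SQ: "S \<subseteq> Q" unfolding S_def Q_def using pq by auto
    have Qn: "Q \<subseteq> {1..n}" unfolding Q_def using img qn by auto
    have cQ: "card Q = q" unfolding Q_def using K_card[OF inj] qn by simp
    define y where "y = \<pi> b"
    define z where "z = \<pi> c"
    define x0 where "x0 = \<pi> a"
    have pqh: "p = qR n lam h" "q = qR n lam (h+1)" using qh qh1 p_def q_def by simp_all
    have abc': "a \<le> p" "p < b" "b \<le> q" "q < c" using abc(2-5) unfolding pqh[symmetric] by simp_all
    have yQ: "y \<in> Q" unfolding y_def Q_def using abc abc' by auto
    have yS: "y \<notin> S"
    proof
      assume "y \<in> S"
      then obtain a' where a': "a' \<in> {1..p}" "\<pi> a' = \<pi> b" unfolding S_def y_def by auto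
      have "a' = b" using inj_onD[OF inj a'(2)] a' abc abc' qn by auto
      then show False using a' abc abc' by auto
    qed
    have zQ: "z \<notin> Q"
    proof
      assume "z \<in> Q"
      then obtain a' where a': "a' \<in> {1..q}" "\<pi> a' = \<pi> c" unfolding Q_def z_def by auto
      have "a' = c" using inj_onD[OF inj a'(2)] a' abc abc' qn by auto
      then show False using a' abc abc' by auto
    qed
    have zn: "z \<in> {1..n}" unfolding z_def using img abc by auto
    have x0S: "x0 \<in> S" unfolding x0_def S_def using abc abc' by auto
    have yz: "y < z" and zx0: "z < x0" using abc unfolding y_def z_def x0_def by auto
    define w where "w = Max {u\<in>Q. u < z}"
    define x where "x = Min {u\<in>Q. z < u}"
    define v1 where "v1 = Min {s\<in>S. z < s}"
    have f1: "finite {u\<in>Q. u < z}" "y \<in> {u\<in>Q. u < z}" using fQ yQ yz by auto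
    have "w \<in> {u\<in>Q. u < z}" using Max_in[OF f1(1)] f1(2) unfolding w_def by blast
    then have wQ: "w \<in> Q" "w < z" by auto
    have wmax: "\<forall>u\<in>Q. u < z \<longrightarrow> u \<le> w" using Max_ge[OF f1(1)] unfolding w_def by auto
    have f2: "finite {u\<in>Q. z < u}" "x0 \<in> {u\<in>Q. z < u}" using fQ x0S SQ zx0 by auto
    have "x \<in> {u\<in>Q. z < u}" using Min_in[OF f2(1)] f2(2) unfolding x_def by blast
    then have xQ: "x \<in> Q" "z < x" by auto
    have xmin: "\<forall>u\<in>Q. z < u \<longrightarrow> x \<le> u" using Min_le[OF f2(1)] unfolding x_def by auto
    have f3: "finite {s\<in>S. z < s}" "x0 \<in> {s\<in>S. z < s}" using x0S zx0 unfolding S_def by auto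
    have "v1 \<in> {s\<in>S. z < s}" using Min_in[OF f3(1)] f3(2) unfolding v1_def by blast
    then have v1S: "v1 \<in> S" "z < v1" by auto
    have v1min: "\<forall>s\<in>S. z < s \<longrightarrow> v1 \<le> s" using Min_le[OF f3(1)] unfolding v1_def by auto
    have "\<exists>\<phi>. (\<forall>u\<in>S. \<phi> u \<le> u) \<and> \<phi> ` S \<subseteq> Q \<and> inj_on \<phi> S \<and> w \<notin> \<phi> ` S \<and> \<phi> v1 = x"
      by (rule exI, rule phi_props[OF fQ SQ yQ yS yz zQ wQ wmax xQ xmin v1S v1min])
    then obtain \<phi> where ph: "\<forall>u\<in>S. \<phi> u \<le> u" "\<phi> ` S \<subseteq> Q" "inj_on \<phi> S" "w \<notin> \<phi> ` S" "\<phi> v1 = x" by blast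
    define g where "g = (\<lambda>e t. if t = x then e else (t::nat))"
    define C where "C = (\<lambda>e j. if q \<le> zeta n lam j then \<pi> ` {1..zeta n lam j} else (g e \<circ> \<phi>) ` \<pi> ` {1..zeta n lam j})"
    have xw: "w < x" using wQ xQ by simp
    have ginj: "inj_on (g e \<circ> \<phi>) S" if "e = x \<or> e \<notin> \<phi> ` S" for e
    proof (rule comp_inj_on[OF ph(3)])
      show "inj_on (g e) (\<phi> ` S)" unfolding inj_on_def g_def using that by auto
    qed
    have grange: "(g e \<circ> \<phi>) ` S \<subseteq> insert e Q" for e using ph(2) unfolding g_def by auto
    have gle: "\<forall>u\<in>S. (g e \<circ> \<phi>) u \<le> u" if "e \<le> x" for e
      using ph(1) that unfolding g_def by (auto simp: comp_def)
    have zphi: "z \<notin> \<phi> ` S" using ph(2) zQ by blast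
    have Sdef: "S = \<pi> ` {1..p}" by (simp add: S_def)
    have Qdef: "Q = \<pi> ` {1..q}" by (simp add: Q_def)
    have img': "\<pi> ` {1..n} \<subseteq> {1..n}" using img by simp
    have wn: "w \<in> {1..n}" "x \<in> {1..n}" using wQ xQ Qn by auto
    have pinj: "inj_on (g e \<circ> \<phi>) (\<pi> ` {1..p})" if "e = x \<or> e \<notin> \<phi> ` S" for e
      using ginj[OF that] unfolding Sdef .
    have good: "goodfam n lam (C e)" if "e = x \<or> e \<notin> \<phi> ` S" "e \<in> {1..n}" for e
    proof -
      have "insert e Q \<subseteq> {1..n}" using Qn that(2) by simp
      then have "(g e \<circ> \<phi>) ` S \<subseteq> {1..n}" using grange[of e] by (rule subset_trans[rotated])
      then have pr: "(g e \<circ> \<phi>) ` \<pi> ` {1..p} \<subseteq> {1..n}" unfolding Sdef .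
      show ?thesis unfolding C_def by (rule fam_good[OF inj img' dich pq pinj[OF that(1)] pr])
    qed
    have nested: "nestedfam n lam (C e)" if "e \<in> Q" for e
    proof -
      have "insert e Q = Q" using that by (rule insert_absorb)
      then have "(g e \<circ> \<phi>) ` S \<subseteq> Q" using grange[of e] by simp
      then have pr: "(g e \<circ> \<phi>) ` \<pi> ` {1..p} \<subseteq> \<pi> ` {1..q}" unfolding Sdef Qdef .
      show ?thesis unfolding C_def by (rule fam_nested[OF dich pq pr])
    qed
    have inD: "colkey n lam (C e) \<in> Dset n lam \<pi>" if "e = x \<or> e \<notin> \<phi> ` S" "e \<in> Q" "e \<le> x" for e
    proof (rule colkey_in_D)
      have eN: "e \<in> {1..n}" using that(2) Qn by blast
      show "goodfam n lam (C e)" using good[OF that(1) eN] .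
      show "nestedfam n lam (C e)" using nested[OF that(2)] .
      have le': "\<forall>u\<in>\<pi> ` {1..p}. (g e \<circ> \<phi>) u \<le> u" using gle[OF that(3)] unfolding Sdef .
      show "\<forall>p\<in>boxes n lam. colkey n lam (C e) p \<le> key n lam \<pi> p"
        unfolding C_def by (rule fam_dom[OF inj dich pinj[OF that(1)] le'])
    qed
    have Dw: "colkey n lam (C w) \<in> Dset n lam \<pi>" using inD[of w] ph(4) wQ xw by simp
    have Dx: "colkey n lam (C x) \<in> Dset n lam \<pi>" using inD[of x] xQ by simp
    define \<alpha> :: real where "\<alpha> = (real x - real z) / (real x - real w)"
    define \<beta> :: real where "\<beta> = (real z - real w) / (real x - real w)"
    have xwr: "real w < real x" using xw by simp
    have ab: "0 \<le> \<alpha>" "0 \<le> \<beta>" "\<alpha> + \<beta> = 1" unfolding \<alpha>_def \<beta>_def using xQ wQ xwr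
      by (auto simp: divide_simps)
    have comb: "\<forall>pp. real_of_int (colkey n lam (C z) pp) = \<alpha> * real_of_int (colkey n lam (C w) pp) + \<beta> * real_of_int (colkey n lam (C x) pp)"
    proof
      fix pp :: "nat \<times> nat"
      obtain j i where ji: "pp = (j,i)" by force
      show "real_of_int (colkey n lam (C z) pp) = \<alpha> * real_of_int (colkey n lam (C w) pp) + \<beta> * real_of_int (colkey n lam (C x) pp)"
      proof (cases "pp \<in> boxes n lam")
        case False then show ?thesis using ji by (simp add: colkey_def)
      next
        case True
        have b: "1 \<le> j" "j \<le> lam 1" "1 \<le> i" "i \<le> zeta n lam j" using True ji by (auto simp: boxes_def)
        show ?thesis
        proof (cases "q \<le> zeta n lam j")
          case True2: True
          then have "C z j = C w j" "C x j = C w j" unfolding C_def by simp_all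
          then have "colkey n lam (C z) pp = colkey n lam (C w) pp" "colkey n lam (C x) pp = colkey n lam (C w) pp"
            using True ji by (simp_all add: colkey_def)
          then show ?thesis using ab(3) by (simp add: algebra_simps) (metis distrib_right mult_1)
        next
          case False
          then have tp: "zeta n lam j \<le> p" using dich b by auto
          let ?K = "\<pi> ` {1..zeta n lam j}"
          let ?A = "\<phi> ` ?K"
          have KS: "?K \<subseteq> S" unfolding S_def using tp by auto
          have AQ: "?A \<subseteq> Q" using ph(2) KS by blast
          have fA: "finite ?A" by simp
          have cA: "card ?A = zeta n lam j"
            using card_image[OF inj_on_subset[OF ph(3) KS]] K_card[OF inj zeta_le] by simp
          have Ce: "C e j = g e ` ?A" for e unfolding C_def using False by (simp add: image_comp)
          have gx: "g x ` ?A = ?A" unfolding g_def by (auto simp: image_iff)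
          have k: "i - 1 < card ?A" using cA b by simp
          have gap2: "a' < x \<Longrightarrow> a' \<in> Q \<Longrightarrow> a' \<le> w" for a'
          proof -
            assume "a' < x" "a' \<in> Q"
            then have "\<not> z < a'" using xmin by force
            moreover have "a' \<noteq> z" using \<open>a' \<in> Q\<close> zQ by blast
            ultimately show "a' \<le> w" using wmax \<open>a' \<in> Q\<close> by simp
          qed
          have condw: "\<forall>a'\<in>?A. a' \<noteq> x \<longrightarrow> (a' < w \<longleftrightarrow> a' < x)"
          proof (intro ballI impI)
            fix a' assume a': "a' \<in> ?A" "a' \<noteq> x"
            have "a' \<noteq> w" using a' ph(4) KS by blast
            then show "a' < w \<longleftrightarrow> a' < x" using gap2[of a'] a' AQ xw by force
          qed
          have condz: "\<forall>a'\<in>?A. a' \<noteq> x \<longrightarrow> (a' < z \<longleftrightarrow> a' < x)"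
          proof (intro ballI impI)
            fix a' assume a': "a' \<in> ?A" "a' \<noteq> x"
            show "a' < z \<longleftrightarrow> a' < x" using gap2[of a'] a' AQ wQ xQ by force
          qed
          have wA: "w \<notin> ?A" using ph(4) KS by blast
          have zA: "z \<notin> ?A" using AQ zQ by blast
          have ew: "sl (C w j) ! (i-1) = (if sl ?A ! (i-1) = x then w else sl ?A ! (i-1))"
            unfolding Ce g_def using gimg[OF fA wA condw k] .
          have ez: "sl (C z j) ! (i-1) = (if sl ?A ! (i-1) = x then z else sl ?A ! (i-1))"
            unfolding Ce g_def using gimg[OF fA zA condz k] .
          have ex: "sl (C x j) ! (i-1) = sl ?A ! (i-1)" unfolding Ce gx ..
          have vals: "colkey n lam (C e) pp = int (sl (C e j) ! (i-1))" for e using True ji by (simp add: colkey_def)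
          show ?thesis
          proof (cases "sl ?A ! (i-1) = x")
            case True3: True
            have "real z = \<alpha> * real w + \<beta> * real x" unfolding \<alpha>_def \<beta>_def using xwr
              by (simp add: divide_simps) (simp add: algebra_simps)
            then show ?thesis unfolding vals ew ez ex using True3 by simp
          next
            case False3: False
            have "real (sl ?A ! (i-1)) = \<alpha> * real (sl ?A ! (i-1)) + \<beta> * real (sl ?A ! (i-1))"
              using ab(3) by (metis distrib_right mult_1)
            then show ?thesis unfolding vals ew ez ex using False3 by simp
          qed
        qed
      qed
    qed
    have Dz: "colkey n lam (C z) \<in> Dset n lam \<pi>"
      by (rule convex_comb[OF cp Dw Dx comb ab]) (auto simp: colkey_def)
    define i0 where "i0 = card {u\<in>Q. u < z}"
    have rf: "(1 \<le> i0 \<longrightarrow> sl Q ! (i0-1) < z) \<and> (\<forall>i'. i0 < i' \<and> i' \<le> card Q \<longrightarrow> z < sl Q ! (i'-1))"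
      using rank_facts[OF fQ zQ i0_def] .
    have i01: "1 \<le> i0"
    proof -
      have "{u\<in>Q. u < z} \<noteq> {}" using f1(2) by blast
      then show ?thesis unfolding i0_def using f1(1) by (simp add: Suc_le_eq card_gt_0_iff)
    qed
    have i0q: "i0 \<le> q" unfolding i0_def using cQ fQ card_mono[of Q "{u\<in>Q. u < z}"] by auto
    have Czl: "C z l = Q" unfolding C_def Q_def using l by simp
    have goodz: "goodfam n lam (C z)" using good[of z] zphi zn by blast
    have sub: "\<forall>j. l \<le> j \<and> j \<le> lam 1 \<longrightarrow> C z j \<subseteq> insert z (C z l)"
    proof (intro allI impI)
      fix j assume j: "l \<le> j \<and> j \<le> lam 1"
      have zj: "zeta n lam j \<le> q" using zeta_anti[of l j n lam] j l by simp
      show "C z j \<subseteq> insert z (C z l)"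
      proof (cases "q \<le> zeta n lam j")
        case True
        then have "zeta n lam j = q" using zj by simp
        then show ?thesis unfolding Czl unfolding C_def Q_def by auto
      next
        case False
        then have "zeta n lam j \<le> p" using dich[rule_format, of j] j l False by linarith
        then have "\<pi> ` {1..zeta n lam j} \<subseteq> S" unfolding S_def by auto
        then have "C z j \<subseteq> (g z \<circ> \<phi>) ` S" unfolding C_def using False by auto
        then show ?thesis unfolding Czl using grange[of z] by blast
      qed
    qed
    have zin: "z \<in> C z (l+1)"
    proof -
      have "C z (l+1) = (g z \<circ> \<phi>) ` S" unfolding C_def S_def using zl1 pq by simp
      moreover have "(g z \<circ> \<phi>) v1 = z" using ph(5) unfolding g_def by simp
      ultimately show ?thesis using v1S by force
    qed
    have above: "\<forall>i'. i0 < i' \<and> i' \<le> zeta n lam l \<longrightarrow> int z < colkey n lam (C z) (l,i')"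
    proof (intro allI impI)
      fix i' assume a: "i0 < i' \<and> i' \<le> zeta n lam l"
      then have "z < sl Q ! (i'-1)" using rf cQ l by simp
      moreover have "(l,i') \<in> boxes n lam" using a l i01 by (simp add: boxes_def)
      ultimately show "int z < colkey n lam (C z) (l,i')" using Czl by (simp add: colkey_def)
    qed
    have "int z \<le> scanning n lam (colkey n lam (C z)) (l,i0)"
      using violation[OF goodz l(1) l1 sub zin i01 _ above] i0q l by simp
    moreover have "scanning n lam (colkey n lam (C z)) (l,i0) \<le> key n lam \<pi> (l,i0)"
    proof -
      have "(l,i0) \<in> boxes n lam" using l i01 i0q by (simp add: boxes_def)
      then show ?thesis using Dz unfolding Dset_def tab_le_def by blast
    qed
    moreover have "key n lam \<pi> (l,i0) = int (sl Q ! (i0-1))"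
      using l i01 i0q unfolding Q_def by (simp add: key_def boxes_def)
    ultimately show False using rf i01 by simp
  qed
qed

end
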